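(* Let $\mathcal B$ be finite, $\eta>0$, $Q,\tilde Q\in\mathbb R^{\mathcal B}$, $V=\eta^{-1}\log\sum_be^{\eta Q(b)}$, $\tilde V=\eta^{-1}\log\sum_be^{\eta\tilde Q(b)}$, $A=Q-V\mathbf 1$, $\tilde A=\tilde Q-\tilde V\mathbf 1$, $\nu=\exp(\eta A)$, $\tilde\nu=\exp(\eta\tilde A)$. Then for every $\xi\in\mathbb R$, $$D_{\rm TV}(\nu,\tilde\nu)\le\eta\Bigl\langle\nu,\ |\tilde Q-Q-\xi\mathbf 1|+\tfrac\eta2\exp\bigl(\eta|\tilde Q-Q-\xi\mathbf 1|\bigr)(\tilde Q-Q-\xi\mathbf 1)^2\Bigr\rangle_{\mathcal B},$$ in particular $D_{\rm TV}(\nu,\tilde\nu)\le\eta\bigl\langle\nu,|\tilde A-A|+\frac\eta2\exp(\eta|\tilde A-A|)(\tilde A-A)^2\bigr\rangle_{\mathcal B}$ (all operations entrywise). Moreover, $$D_{\rm TV}(\nu,\tilde\nu)\ge\tfrac12\bigl\langle\nu,\ \eta\exp(-\eta|\tilde A-A|)\,|\tilde A-A|\bigr\rangle_{\mathcal B},$$ and if $B_A>0$ satisfies $\max\{\|A\|_\infty,\|\tilde A\|_\infty\}\le B_A$, then $$D_{\rm TV}(\nu,\tilde\nu)\ge\frac{\eta}{2(1+2\eta B_A)}\langle\nu,|\tilde A-A|\rangle_{\mathcal B}.$$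
   Context: $D_{\rm TV}(p,q)=\frac12\|p-q\|_1$; $\langle f,g\rangle_{\mathcal B}=\sum_{b\in\mathcal B}f(b)g(b)$; $\mathbf 1$ is the all-ones vector. *)

theory Defs
  imports "HOL-Analysis.Analysis"
begin

definition softV :: "real \<Rightarrow> 'b set \<Rightarrow> ('b \<Rightarrow> real) \<Rightarrow> real" where
  "softV \<eta> B Q = ln (\<Sum>b\<in>B. exp (\<eta> * Q b)) / \<eta>"

definition adv :: "real \<Rightarrow> 'b set \<Rightarrow> ('b \<Rightarrow> real) \<Rightarrow> 'b \<Rightarrow> real" where
  "adv \<eta> B Q b = Q b - softV \<eta> B Q"

definition softpol :: "real \<Rightarrow> 'b set \<Rightarrow> ('b \<Rightarrow> real) \<Rightarrow> 'b \<Rightarrow> real" where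
  "softpol \<eta> B Q b = exp (\<eta> * adv \<eta> B Q b)"

definition dTV :: "'b set \<Rightarrow> ('b \<Rightarrow> real) \<Rightarrow> ('b \<Rightarrow> real) \<Rightarrow> real" where
  "dTV B p q = (\<Sum>b\<in>B. \<bar>p b - q b\<bar>) / 2"

end

theory Submission
  imports Defs
begin

lemma exp_taylor2: "\<bar>exp x - 1\<bar> \<le> \<bar>x\<bar> + x\<^sup>2 / 2 * exp \<bar>x\<bar>" for x :: real
proof -
  obtain t where t: "\<bar>t\<bar> \<le> \<bar>x\<bar>" "exp x = (\<Sum>m<2. (x ^ m) / fact m) + (exp t / fact 2) * x ^ 2"
    using Maclaurin_exp_le[of x 2] by blast
  have e: "exp x - 1 - x = exp t / 2 * x\<^sup>2" using t(2) by (simp add: numeral_2_eq_2)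
  have "exp t \<le> exp \<bar>x\<bar>" using t(1) by simp
  hence "exp t * x\<^sup>2 \<le> exp \<bar>x\<bar> * x\<^sup>2"
    by (rule mult_right_mono) simp
  hence "exp t / 2 * x\<^sup>2 \<le> x\<^sup>2 / 2 * exp \<bar>x\<bar>" by (simp add: mult.commute)
  moreover have "exp t / 2 * x\<^sup>2 \<ge> 0" by simp
  ultimately show ?thesis using e by linarith
qed

lemma exp_low1: "\<bar>exp x - 1\<bar> \<ge> \<bar>x\<bar> * exp (- \<bar>x\<bar>)" for x :: real
proof (cases "x \<ge> 0")
  case True
  have "exp (-x) \<le> 1" using True by simp
  hence "x * exp (-x) \<le> x" using True by (simp add: mult_left_le)
  moreover have "x + 1 \<le> exp x" using exp_ge_add_one_self[of x] by linarith
  ultimately show ?thesis using True by simp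
next
  case False
  let ?y = "-x"
  have "1 + ?y \<le> exp ?y" using exp_ge_add_one_self[of ?y] by linarith
  hence "(1 + ?y) * exp x \<le> exp ?y * exp x" by (rule mult_right_mono) simp
  hence "(1 + ?y) * exp x \<le> 1" by (simp add: mult_exp_exp)
  moreover have "exp x \<le> 1" using False by simp
  ultimately show ?thesis using False by (simp add: algebra_simps)
qed

lemma exp_low2: "\<bar>exp x - 1\<bar> \<ge> \<bar>x\<bar> / (1 + \<bar>x\<bar>)" for x :: real
proof (cases "x \<ge> 0")
  case True
  have "x / (1 + x) \<le> x / 1" using True by (intro divide_left_mono) auto
  moreover have "x + 1 \<le> exp x" using exp_ge_add_one_self[of x] by linarith
  ultimately show ?thesis using True by simp
next
  case False
  let ?y = "-x"
  have "1 + ?y \<le> exp ?y" using exp_ge_add_one_self[of ?y] by linarith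
  hence "(1 + ?y) * exp x \<le> exp ?y * exp x" by (rule mult_right_mono) simp
  hence h: "(1 + ?y) * exp x \<le> 1" by (simp add: mult_exp_exp)
  have "exp x \<le> 1" using False by simp
  moreover have "?y / (1 + ?y) \<le> 1 - exp x"
  proof -
    have "exp x \<le> 1 / (1 + ?y)" using h False by (simp add: le_divide_eq mult.commute)
    moreover have "?y / (1 + ?y) = 1 - 1 / (1 + ?y)" using False by (simp add: field_simps)
    ultimately show ?thesis by linarith
  qed
  ultimately show ?thesis using False by simp
qed

theorem mainTheorem10:
  fixes B :: "'b set" and \<eta> :: real and Q Qt :: "'b \<Rightarrow> real"
  assumes "finite B" and "B \<noteq> {}" and "\<eta> > 0"
  defines "A \<equiv> adv \<eta> B Q" and "At \<equiv> adv \<eta> B Qt"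
      and "\<nu> \<equiv> softpol \<eta> B Q" and "\<nu>t \<equiv> softpol \<eta> B Qt"
  shows "(\<forall>\<xi>::real. dTV B \<nu> \<nu>t \<le> \<eta> * (\<Sum>b\<in>B. \<nu> b *
            (\<bar>Qt b - Q b - \<xi>\<bar> + \<eta> / 2 * exp (\<eta> * \<bar>Qt b - Q b - \<xi>\<bar>) * (Qt b - Q b - \<xi>)\<^sup>2))) \<and>
        dTV B \<nu> \<nu>t \<le> \<eta> * (\<Sum>b\<in>B. \<nu> b *
            (\<bar>At b - A b\<bar> + \<eta> / 2 * exp (\<eta> * \<bar>At b - A b\<bar>) * (At b - A b)\<^sup>2)) \<and>
        dTV B \<nu> \<nu>t \<ge> 1/2 * (\<Sum>b\<in>B. \<nu> b * (\<eta> * exp (- \<eta> * \<bar>At b - A b\<bar>) * \<bar>At b - A b\<bar>)) \<and>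
        (\<forall>BA::real. BA > 0 \<longrightarrow> (\<forall>b\<in>B. \<bar>A b\<bar> \<le> BA \<and> \<bar>At b\<bar> \<le> BA) \<longrightarrow>
            dTV B \<nu> \<nu>t \<ge> \<eta> / (2 * (1 + 2 * \<eta> * BA)) * (\<Sum>b\<in>B. \<nu> b * \<bar>At b - A b\<bar>))"
proof -
  note fin = assms(1) and ne = assms(2) and eta = assms(3)
  have sum1: "(\<Sum>b\<in>B. softpol \<eta> B R b) = 1" for R
  proof -
    define S where "S = (\<Sum>b\<in>B. exp (\<eta> * R b))"
    have Spos: "S > 0" unfolding S_def using fin ne by (intro sum_pos) auto
    have "softpol \<eta> B R b = exp (\<eta> * R b) / S" for b
      unfolding softpol_def adv_def softV_def S_def[symmetric] using eta Spos
      by (simp add: right_diff_distrib exp_diff)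
    hence "(\<Sum>b\<in>B. softpol \<eta> B R b) = (\<Sum>b\<in>B. exp (\<eta> * R b)) / S"
      by (simp add: sum_divide_distrib)
    thus ?thesis using Spos S_def by simp
  qed
  have nu1: "(\<Sum>b\<in>B. \<nu> b) = 1" and nut1: "(\<Sum>b\<in>B. \<nu>t b) = 1"
    unfolding \<nu>_def \<nu>t_def by (rule sum1)+
  have nupos: "\<nu> b > 0" for b unfolding \<nu>_def softpol_def by simp
  have rel: "\<nu>t b = \<nu> b * exp (\<eta> * (At b - A b))" for b
    unfolding \<nu>_def \<nu>t_def softpol_def At_def A_def
    by (simp add: mult_exp_exp right_diff_distrib)
  have dTV_eq: "dTV B \<nu> \<nu>t = (\<Sum>b\<in>B. \<nu> b * \<bar>exp (\<eta> * (At b - A b)) - 1\<bar>) / 2"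
    unfolding dTV_def rel
  proof (intro arg_cong[where f="\<lambda>x. x / 2"] sum.cong refl)
    fix b
    have "\<nu> b - \<nu> b * exp (\<eta> * (At b - A b)) = \<nu> b * (1 - exp (\<eta> * (At b - A b)))"
      by (simp add: right_diff_distrib)
    thus "\<bar>\<nu> b - \<nu> b * exp (\<eta> * (At b - A b))\<bar> = \<nu> b * \<bar>exp (\<eta> * (At b - A b)) - 1\<bar>"
      using nupos[of b] by (simp add: abs_mult abs_minus_commute)
  qed
  have AtA: "At b - A b = Qt b - Q b - (softV \<eta> B Qt - softV \<eta> B Q)" for b
    unfolding At_def A_def adv_def by simp
  have P1: "dTV B \<nu> \<nu>t \<le> \<eta> * (\<Sum>b\<in>B. \<nu> b *
            (\<bar>Qt b - Q b - \<xi>\<bar> + \<eta> / 2 * exp (\<eta> * \<bar>Qt b - Q b - \<xi>\<bar>) * (Qt b - Q b - \<xi>)\<^sup>2))" for \<xi>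
  proof -
    define D where "D b = Qt b - Q b - \<xi>" for b
    define w where "w b = exp (\<eta> * D b)" for b
    define c where "c = exp (\<eta> * (\<xi> - (softV \<eta> B Qt - softV \<eta> B Q)))"
    define Z where "Z = (\<Sum>b\<in>B. \<nu> b * w b)"
    have nut: "\<nu>t b = c * (\<nu> b * w b)" for b
      unfolding rel AtA c_def w_def D_def by (simp add: mult_exp_exp algebra_simps)
    have cZ: "c * Z = 1" using nut1 unfolding nut Z_def by (simp add: sum_distrib_left)
    have Zpos: "Z \<ge> 0" unfolding Z_def w_def using nupos by (intro sum_nonneg) (simp add: less_imp_le)
    have tri: "\<bar>\<nu> b - \<nu>t b\<bar> \<le> \<nu> b * \<bar>w b - 1\<bar> + \<bar>1 - c\<bar> * (\<nu> b * w b)" for b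
    proof -
      have "\<bar>\<nu> b - \<nu>t b\<bar> \<le> \<bar>\<nu> b - \<nu> b * w b\<bar> + \<bar>\<nu> b * w b - \<nu>t b\<bar>" by linarith
      also have "\<bar>\<nu> b - \<nu> b * w b\<bar> = \<nu> b * \<bar>w b - 1\<bar>"
      proof -
        have "\<nu> b - \<nu> b * w b = \<nu> b * (1 - w b)" by (simp add: right_diff_distrib)
        thus ?thesis using nupos[of b] by (simp add: abs_mult abs_minus_commute)
      qed
      also have "\<bar>\<nu> b * w b - \<nu>t b\<bar> = \<bar>1 - c\<bar> * (\<nu> b * w b)"
      proof -
        have "\<nu> b * w b - c * (\<nu> b * w b) = (1 - c) * (\<nu> b * w b)" by (simp add: left_diff_distrib)
        moreover have "\<nu> b * w b > 0" using nupos[of b] by (simp add: w_def)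
        ultimately show ?thesis unfolding nut by (metis abs_mult abs_of_pos)
      qed
      finally show ?thesis .
    qed
    have "(\<Sum>b\<in>B. \<bar>\<nu> b - \<nu>t b\<bar>) \<le> (\<Sum>b\<in>B. \<nu> b * \<bar>w b - 1\<bar>) + \<bar>1 - c\<bar> * Z"
      unfolding Z_def sum_distrib_left sum.distrib[symmetric] by (rule sum_mono[OF tri])
    also have "\<bar>1 - c\<bar> * Z = \<bar>Z - 1\<bar>" using cZ Zpos
      by (metis abs_mult abs_of_nonneg mult.commute right_diff_distrib' mult_1_right abs_minus_commute)
    also have "Z - 1 = (\<Sum>b\<in>B. \<nu> b * (w b - 1))"
      unfolding Z_def using nu1 by (simp add: right_diff_distrib sum_subtractf)
    also have "\<bar>\<dots>\<bar> \<le> (\<Sum>b\<in>B. \<nu> b * \<bar>w b - 1\<bar>)"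
      by (rule order_trans[OF sum_abs]) (simp add: abs_mult nupos less_imp_le)
    finally have "(\<Sum>b\<in>B. \<bar>\<nu> b - \<nu>t b\<bar>) \<le> 2 * (\<Sum>b\<in>B. \<nu> b * \<bar>w b - 1\<bar>)" by linarith
    hence "dTV B \<nu> \<nu>t \<le> (\<Sum>b\<in>B. \<nu> b * \<bar>w b - 1\<bar>)" unfolding dTV_def by simp
    also have "\<dots> \<le> (\<Sum>b\<in>B. \<nu> b * (\<eta> * (\<bar>D b\<bar> + \<eta> / 2 * exp (\<eta> * \<bar>D b\<bar>) * (D b)\<^sup>2)))"
    proof (intro sum_mono mult_left_mono)
      fix b
      have "\<bar>w b - 1\<bar> \<le> \<bar>\<eta> * D b\<bar> + (\<eta> * D b)\<^sup>2 / 2 * exp \<bar>\<eta> * D b\<bar>"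
        unfolding w_def by (rule exp_taylor2)
      also have "\<dots> = \<eta> * (\<bar>D b\<bar> + \<eta> / 2 * exp (\<eta> * \<bar>D b\<bar>) * (D b)\<^sup>2)"
        using eta by (simp add: abs_mult power2_eq_square algebra_simps)
      finally show "\<bar>w b - 1\<bar> \<le> \<eta> * (\<bar>D b\<bar> + \<eta> / 2 * exp (\<eta> * \<bar>D b\<bar>) * (D b)\<^sup>2)" .
    qed (simp add: nupos less_imp_le)
    also have "\<dots> = \<eta> * (\<Sum>b\<in>B. \<nu> b * (\<bar>D b\<bar> + \<eta> / 2 * exp (\<eta> * \<bar>D b\<bar>) * (D b)\<^sup>2))"
      by (simp add: sum_distrib_left algebra_simps)
    finally show ?thesis unfolding D_def .
  qed
  have P2: "dTV B \<nu> \<nu>t \<le> \<eta> * (\<Sum>b\<in>B. \<nu> b *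
            (\<bar>At b - A b\<bar> + \<eta> / 2 * exp (\<eta> * \<bar>At b - A b\<bar>) * (At b - A b)\<^sup>2))"
    unfolding AtA by (rule P1)
  have P3: "dTV B \<nu> \<nu>t \<ge> 1/2 * (\<Sum>b\<in>B. \<nu> b * (\<eta> * exp (- \<eta> * \<bar>At b - A b\<bar>) * \<bar>At b - A b\<bar>))"
  proof -
    have "(\<Sum>b\<in>B. \<nu> b * (\<eta> * exp (- \<eta> * \<bar>At b - A b\<bar>) * \<bar>At b - A b\<bar>))
          \<le> (\<Sum>b\<in>B. \<nu> b * \<bar>exp (\<eta> * (At b - A b)) - 1\<bar>)"
    proof (intro sum_mono mult_left_mono)
      fix b
      have "\<bar>\<eta> * (At b - A b)\<bar> * exp (- \<bar>\<eta> * (At b - A b)\<bar>) \<le> \<bar>exp (\<eta> * (At b - A b)) - 1\<bar>"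
        by (rule exp_low1)
      moreover have "\<bar>\<eta> * (At b - A b)\<bar> = \<eta> * \<bar>At b - A b\<bar>" using eta by (simp add: abs_mult)
      ultimately show "\<eta> * exp (- \<eta> * \<bar>At b - A b\<bar>) * \<bar>At b - A b\<bar> \<le> \<bar>exp (\<eta> * (At b - A b)) - 1\<bar>"
        by (simp add: mult_ac)
    qed (simp add: nupos less_imp_le)
    thus ?thesis unfolding dTV_eq by simp
  qed
  have P4: "dTV B \<nu> \<nu>t \<ge> \<eta> / (2 * (1 + 2 * \<eta> * BA)) * (\<Sum>b\<in>B. \<nu> b * \<bar>At b - A b\<bar>)"
    if BA: "BA > 0" "\<forall>b\<in>B. \<bar>A b\<bar> \<le> BA \<and> \<bar>At b\<bar> \<le> BA" for BA
  proof -
    have den: "1 + 2 * \<eta> * BA > 0" using eta BA by (simp add: add_pos_pos)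
    have "(\<Sum>b\<in>B. \<nu> b * (\<eta> / (1 + 2 * \<eta> * BA) * \<bar>At b - A b\<bar>))
          \<le> (\<Sum>b\<in>B. \<nu> b * \<bar>exp (\<eta> * (At b - A b)) - 1\<bar>)"
    proof (intro sum_mono mult_left_mono)
      fix b assume b: "b \<in> B"
      let ?x = "\<eta> * (At b - A b)"
      have xb: "\<bar>?x\<bar> \<le> 2 * \<eta> * BA"
      proof -
        have "\<bar>At b - A b\<bar> \<le> 2 * BA" using BA b by auto
        hence "\<eta> * \<bar>At b - A b\<bar> \<le> \<eta> * (2 * BA)" using eta by (intro mult_left_mono) auto
        thus ?thesis using eta by (simp add: abs_mult)
      qed
      have "\<bar>?x\<bar> / (1 + 2 * \<eta> * BA) \<le> \<bar>?x\<bar> / (1 + \<bar>?x\<bar>)"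
        using xb by (intro divide_left_mono) auto
      also have "\<dots> \<le> \<bar>exp ?x - 1\<bar>" by (rule exp_low2)
      finally show "\<eta> / (1 + 2 * \<eta> * BA) * \<bar>At b - A b\<bar> \<le> \<bar>exp ?x - 1\<bar>"
        using eta by (simp add: abs_mult)
    qed (simp add: nupos less_imp_le)
    moreover have "(\<Sum>b\<in>B. \<nu> b * (\<eta> / (1 + 2 * \<eta> * BA) * \<bar>At b - A b\<bar>))
       = 2 * (\<eta> / (2 * (1 + 2 * \<eta> * BA)) * (\<Sum>b\<in>B. \<nu> b * \<bar>At b - A b\<bar>))"
    proof -
      have "(\<Sum>b\<in>B. \<nu> b * (\<eta> / (1 + 2 * \<eta> * BA) * \<bar>At b - A b\<bar>))
          = \<eta> / (1 + 2 * \<eta> * BA) * (\<Sum>b\<in>B. \<nu> b * \<bar>At b - A b\<bar>)"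
        by (simp add: sum_distrib_left mult_ac)
      moreover have "2 * (\<eta> / (2 * (1 + 2 * \<eta> * BA))) = \<eta> / (1 + 2 * \<eta> * BA)" using den by (simp add: field_simps)
      ultimately show ?thesis by (simp only: mult.assoc[symmetric])
    qed
    ultimately show ?thesis unfolding dTV_eq by linarith
  qed
  show ?thesis using P1 P2 P3 P4 by blast
qed

end
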